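(* Let $G$ be a finite cyclic group whose order has at least two distinct prime divisors. Then the difference graph $\mathcal{D}(G)$ is disconnected if and only if $G\cong\mathbb{Z}_{pq}$ where $p$ and $q$ are two distinct primes. Moreover, the diameter of $\mathcal{D}(G)$ is at most $6$ whenever $G\not\cong\mathbb{Z}_{pq}$.
   Context: For a finite group $G$ with identity $e$: the intersection power graph $\mathcal{G}_I(G)$ has vertex set $G$, two distinct non-identity vertices $x,y$ being adjacent iff $\langle x\rangle\cap\langle y\rangle\neq\{e\}$, and $e$ being adjacent to every other vertex. The power graph $\mathcal{P}(G)$ has vertex set $G$, two distinct vertices being adjacent iff one is a power of the other. The difference graph $\mathcal{D}(G)$ is the graph on vertex set $G$ with edge set $E(\mathcal{G}_I(G))\setminus E(\mathcal{P}(G))$, with all isolated vertices removed. *)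

theory Defs
  imports "HOL-Algebra.Algebra" "HOL-Library.Extended_Nat"
begin

definition pow_adj :: "('a, 'b) monoid_scheme \<Rightarrow> 'a \<Rightarrow> 'a \<Rightarrow> bool" where
  "pow_adj G x y \<longleftrightarrow> x \<in> carrier G \<and> y \<in> carrier G \<and> x \<noteq> y \<and>
     ((\<exists>k::int. y = x [^]\<^bsub>G\<^esub> k) \<or> (\<exists>k::int. x = y [^]\<^bsub>G\<^esub> k))"

definition ipow_adj :: "('a, 'b) monoid_scheme \<Rightarrow> 'a \<Rightarrow> 'a \<Rightarrow> bool" where
  "ipow_adj G x y \<longleftrightarrow> x \<in> carrier G \<and> y \<in> carrier G \<and> x \<noteq> y \<and>
     (x = \<one>\<^bsub>G\<^esub> \<or> y = \<one>\<^bsub>G\<^esub> \<or>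
      generate G {x} \<inter> generate G {y} \<noteq> {\<one>\<^bsub>G\<^esub>})"

definition diff_adj :: "('a, 'b) monoid_scheme \<Rightarrow> 'a \<Rightarrow> 'a \<Rightarrow> bool" where
  "diff_adj G x y \<longleftrightarrow> ipow_adj G x y \<and> \<not> pow_adj G x y"

definition diff_verts :: "('a, 'b) monoid_scheme \<Rightarrow> 'a set" where
  "diff_verts G = {x \<in> carrier G. \<exists>y. diff_adj G x y}"

definition diff_connected :: "('a, 'b) monoid_scheme \<Rightarrow> bool" where
  "diff_connected G \<longleftrightarrow> diff_verts G \<noteq> {} \<and>
     (\<forall>u \<in> diff_verts G. \<forall>v \<in> diff_verts G. (diff_adj G)\<^sup>*\<^sup>* u v)"

definition diff_dist :: "('a, 'b) monoid_scheme \<Rightarrow> 'a \<Rightarrow> 'a \<Rightarrow> enat" where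
  "diff_dist G u v = (if \<exists>n. (diff_adj G ^^ n) u v
                      then enat (LEAST n. (diff_adj G ^^ n) u v) else \<infinity>)"

definition diff_diam :: "('a, 'b) monoid_scheme \<Rightarrow> enat" where
  "diff_diam G = (SUP u \<in> diff_verts G. SUP v \<in> diff_verts G. diff_dist G u v)"

end

theory Submission
  imports Defs
begin


definition Rd :: "nat \<Rightarrow> nat \<Rightarrow> bool" where
  "Rd a b \<longleftrightarrow> \<not> coprime a b \<and> \<not> a dvd b \<and> \<not> b dvd a"

lemma Rd_sym: "Rd a b \<Longrightarrow> Rd b a"
  unfolding Rd_def by (auto simp: coprime_commute)

lemma Rd_not1: "Rd a b \<Longrightarrow> a \<noteq> 1"
  unfolding Rd_def by auto

lemma Rd_notprime: "Rd a b \<Longrightarrow> \<not> Factorial_Ring.prime a"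
  unfolding Rd_def using prime_imp_coprime by blast

lemma Rd_not_n: "Rd a b \<Longrightarrow> b dvd n \<Longrightarrow> a \<noteq> n"
  unfolding Rd_def by auto

lemma lemmaA:
  fixes n a b r :: nat
  assumes "Rd a b" "b dvd n" "a dvd n" "Factorial_Ring.prime r" "r dvd n" "\<not> a dvd n div r"
  shows "a = n div r \<or> Rd a (n div r)"
proof (cases "a = n div r")
  case True then show ?thesis by blast
next
  case False
  then have ne: "a \<noteq> n div r" .
  have nr: "n = r * (n div r)" using assms(5) by simp
  have "\<not> (n div r) dvd a"
  proof
    assume "(n div r) dvd a"
    then obtain t where t: "a = (n div r) * t" by (auto elim: dvdE)
    from assms(3) nr t have "(n div r) * t dvd (n div r) * r" by (metis mult.commute)
    moreover have "n div r \<noteq> 0" using nr assms(4) ne t by auto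
    ultimately have "t dvd r" by simp
    then have "t = 1 \<or> t = r" using assms(4) by (meson prime_nat_iff)
    then show False using ne t nr Rd_not_n[OF assms(1,2)] by (auto simp: mult.commute)
  qed
  moreover have "\<not> coprime a (n div r)"
  proof
    assume "coprime a (n div r)"
    moreover have "a dvd r * (n div r)" using assms(3) nr by simp
    ultimately have "a dvd r" using coprime_dvd_mult_left_iff by blast
    then have "a = 1 \<or> a = r" using assms(4) by (meson prime_nat_iff)
    then show False using Rd_not1[OF assms(1)] Rd_notprime[OF assms(1)] assms(4) by auto
  qed
  ultimately show ?thesis using assms(6) unfolding Rd_def by auto
qed

lemma pnu: "Factorial_Ring.prime (p::nat) \<Longrightarrow> \<not> is_unit p"
  using not_prime_unit by blast

lemma pow_mult_not_dvd:
  fixes n r :: nat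
  assumes "Factorial_Ring.prime r" "n \<noteq> 0" "r ^ multiplicity r n dvd b" "b dvd n div r" "r dvd n"
  shows False
proof -
  have "r ^ multiplicity r n * r dvd (n div r) * r" using assms(3,4) by (meson dvd_trans mult_dvd_mono dvd_refl)
  then have "r ^ Suc (multiplicity r n) dvd n" using assms(5) by (simp add: mult.commute)
  then have "Suc (multiplicity r n) \<le> multiplicity r n"
    by (rule multiplicity_geI[OF assms(2) pnu[OF assms(1)]])
  then show False by simp
qed

lemma lemmaB:
  fixes n a b :: nat
  assumes "Rd a b" "b dvd n" "a dvd n" "n \<noteq> 0"
    and p2: "Factorial_Ring.prime p1" "Factorial_Ring.prime p2" "p1 \<noteq> p2" "p1 dvd n" "p2 dvd n"
  shows "(\<exists>r. Factorial_Ring.prime r \<and> r dvd n \<and> \<not> a dvd n div r) \<or>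
         (\<exists>c r. c dvd n \<and> Rd a c \<and> Factorial_Ring.prime r \<and> r dvd n \<and> \<not> c dvd n div r)"
proof (cases "\<exists>r. Factorial_Ring.prime r \<and> r dvd n \<and> \<not> a dvd n div r")
  case True then show ?thesis by blast
next
  case False
  note H = False
  have "a \<noteq> 1" using Rd_not1[OF assms(1)] .
  moreover have "a \<noteq> 0" using assms(3,4) by auto
  ultimately obtain p where p: "Factorial_Ring.prime p" "p dvd a"
    by (metis prime_factor_nat)
  have pn: "p dvd n" using p assms(3) dvd_trans by blast
  define P where "P = p ^ multiplicity p n"
  have Pn: "P dvd n" unfolding P_def by (rule multiplicity_dvd)
  have mpos: "multiplicity p n \<ge> 1" using p pn assms(4)
    using multiplicity_gt_zero_iff[OF assms(4) pnu[OF p(1)]] by simp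
  have pP: "p dvd P" unfolding P_def using mpos by (simp add: dvd_power)
  show ?thesis
  proof (cases "a dvd P")
    case False
    have H': "\<forall>r. Factorial_Ring.prime r \<and> r dvd n \<longrightarrow> a dvd n div r" using H by blast
    have anp: "a dvd n div p" using HOL.mp[OF spec[OF H', of p] conjI[OF p(1) pn]] .
    have nPd: "\<not> P dvd n div p"
    proof
      assume h: "P dvd n div p"
      show False by (rule pow_mult_not_dvd[OF p(1) assms(4) dvd_refl h[unfolded P_def] pn])
    qed
    moreover have "\<not> P dvd a"
    proof
      assume "P dvd a"
      then have "P dvd n div p" using anp by (rule dvd_trans)
      then show False using nPd by contradiction
    qed
    moreover have "\<not> coprime a P" by (rule not_coprimeI[OF p(2) pP pnu[OF p(1)]])
    ultimately have "Rd a P" using False unfolding Rd_def by simp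
    then show ?thesis by (intro disjI2 exI[of _ P] exI[of _ p] conjI Pn p(1) pn nPd)
  next
    case True
    then obtain i where i: "a = p ^ i" using divides_primepow_nat[OF p(1)] unfolding P_def by auto
    have "i \<noteq> 0" using \<open>a \<noteq> 1\<close> i by auto
    moreover have "i \<noteq> 1" using Rd_notprime[OF assms(1)] i p by auto
    ultimately have p2a: "p^2 dvd a" using i by (simp add: le_imp_power_dvd)
    have "\<exists>r. Factorial_Ring.prime r \<and> r dvd n \<and> r \<noteq> p"
    proof (cases "p1 = p")
      case True then show ?thesis using p2(2,3,5) by auto
    next
      case False then show ?thesis using p2(1,4) by auto
    qed
    then obtain r where r: "Factorial_Ring.prime r" "r dvd n" "r \<noteq> p" by auto
    define c where "c = p * r ^ multiplicity r n"
    have cop: "coprime p (r ^ multiplicity r n)"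
      using r p by (simp add: primes_coprime)
    have cn: "c dvd n" unfolding c_def by (rule divides_mult[OF pn multiplicity_dvd cop])
    have ncd: "\<not> c dvd n div r"
    proof
      assume h: "c dvd n div r"
      have hh: "r ^ multiplicity r n dvd n div r" by (rule dvd_trans[OF dvd_triv_right h[unfolded c_def]])
      show False by (rule pow_mult_not_dvd[OF r(1) assms(4) dvd_refl hh r(2)])
    qed
    have "\<not> coprime a c" unfolding c_def by (rule not_coprimeI[OF p(2) dvd_triv_left pnu[OF p(1)]])
    moreover have "\<not> a dvd c"
    proof
      assume "a dvd c"
      then have "p^2 dvd c" by (rule dvd_trans[OF p2a])
      then have "p * p dvd p * r ^ multiplicity r n" unfolding c_def by (simp add: power2_eq_square)
      then have "p dvd r ^ multiplicity r n" using p(1) by (simp add: prime_gt_0_nat)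
      then have "p dvd r" by (rule prime_dvd_power[OF p(1)])
      then show False using primes_dvd_imp_eq[OF p(1) r(1)] r(3) by simp
    qed
    moreover have "\<not> c dvd a"
    proof
      assume "c dvd a"
      have m0: "multiplicity r n > 0"
        using multiplicity_gt_zero_iff[OF assms(4) pnu[OF r(1)]] r(2) by simp
      have "r dvd r ^ multiplicity r n" using m0 by simp
      then have "r dvd c" unfolding c_def by (rule dvd_mult)
      then have "r dvd p ^ i" using \<open>c dvd a\<close> i by (metis dvd_trans)
      then have "r dvd p" by (rule prime_dvd_power[OF r(1)])
      then show False using primes_dvd_imp_eq[OF r(1) p(1)] r(3) by simp
    qed
    ultimately have "Rd a c" unfolding Rd_def by simp
    then show ?thesis by (intro disjI2 exI[of _ c] exI[of _ r] conjI cn r(1) r(2) ncd)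
  qed
qed

lemma hub:
  fixes n p r :: nat
  assumes "Factorial_Ring.prime p" "Factorial_Ring.prime r" "p \<noteq> r" "p dvd n" "r dvd n" "n \<noteq> p * r" "n \<noteq> 0"
  shows "Rd (n div p) (n div r)"
proof -
  have "p * r dvd n" using assms by (simp add: divides_mult primes_coprime)
  then obtain t where t: "n = p * r * t" by (auto elim: dvdE)
  have t1: "t \<noteq> 1" using t assms(6) by auto
  have t0: "t \<noteq> 0" using t assms(7) by auto
  have a: "n div p = r * t" using t assms(1) by (simp add: prime_gt_0_nat)
  have b: "n div r = p * t" using t assms(2) by (simp add: prime_gt_0_nat)
  have nc: "\<not> coprime (r*t) (p*t)" using t1 by auto
  have "\<not> r dvd p" "\<not> p dvd r" using assms(1-3) primes_dvd_imp_eq by metis+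
  then have "\<not> r * t dvd p * t" "\<not> p * t dvd r * t" using t0 by simp_all
  show ?thesis using nc \<open>\<not> r * t dvd p * t\<close> \<open>\<not> p * t dvd r * t\<close> unfolding Rd_def a b by auto
qed



lemma pq_divisors:
  fixes p q a :: nat
  assumes "Factorial_Ring.prime p" "Factorial_Ring.prime q" "a dvd p * q"
  shows "a = 1 \<or> a = p \<or> a = q \<or> a = p * q"
proof -
  obtain b c where bc: "a = b * c" "b dvd p" "c dvd q" using division_decomp[OF assms(3)] by auto
  have "b = 1 \<or> b = p" using bc(2) assms(1) by (simp add: prime_nat_iff)
  moreover have "c = 1 \<or> c = q" using bc(3) assms(2) by (simp add: prime_nat_iff)
  ultimately show ?thesis using bc(1) by auto
qed

lemma pq_noRd:
  fixes p q a b :: nat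
  assumes "Factorial_Ring.prime p" "Factorial_Ring.prime q" "p \<noteq> q" "a dvd p * q" "b dvd p * q"
  shows "\<not> Rd a b"
proof -
  have pq: "\<not> p dvd q" "\<not> q dvd p" "coprime p q"
    using primes_dvd_imp_eq[OF assms(1,2)] primes_dvd_imp_eq[OF assms(2,1)] assms(3)
      primes_coprime[OF assms(1,2,3)] by auto
  have p1: "p > 1" "q > 1" using assms(1,2) prime_gt_1_nat by auto
  have np: "\<not> p * q dvd p" "\<not> p * q dvd q"
  proof -
    show "\<not> p * q dvd p"
    proof
      assume "p * q dvd p" then have "p * q \<le> p" using p1 by (simp add: dvd_imp_le)
      then show False using p1 by simp
    qed
    show "\<not> p * q dvd q"
    proof
      assume "p * q dvd q" then have "p * q \<le> q" using p1 by (simp add: dvd_imp_le)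
      then show False using p1 by simp
    qed
  qed
  show ?thesis using pq_divisors[OF assms(1,2,4)] pq_divisors[OF assms(1,2,5)] pq np
    unfolding Rd_def by (auto simp: coprime_commute)
qed

context group
begin

lemma cyc_gen:
  assumes "finite (carrier G)" "cyclic_group G"
  obtains g where "g \<in> carrier G" "ord g = order G" "\<And>x. x \<in> carrier G \<Longrightarrow> \<exists>i::nat. x = g [^] i"
proof -
  obtain g where g: "g \<in> carrier G" "carrier G = range (\<lambda>n::int. g [^] n)"
    using assms(2) cyclic_group by blast
  have "generate G {g} = carrier G" using g generate_pow by auto
  then have "ord g = order G" using generate_pow_card[OF g(1)] unfolding order_def by simp
  moreover have "\<exists>i::nat. x = g [^] i" if "x \<in> carrier G" for x
    using that generate_pow_on_finite_carrier[OF assms(1) g(1)] \<open>generate G {g} = carrier G\<close> by auto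
  ultimately show ?thesis using that g by blast
qed

lemma order_pos:
  assumes "finite (carrier G)" shows "order G > 0"
  using assms order_gt_0_iff_finite by blast

lemma exists_ord:
  assumes "finite (carrier G)" "cyclic_group G" "d dvd order G"
  shows "\<exists>x \<in> carrier G. ord x = d"
proof -
  obtain g where g: "g \<in> carrier G" "ord g = order G" using cyc_gen[OF assms(1,2)] by metis
  have n0: "order G > 0" using order_pos[OF assms(1)] .
  obtain k where k: "order G = d * k" using assms(3) by (auto elim: dvdE)
  have d0: "d > 0" "k > 0" using k n0 by auto
  have kk: "k dvd ord g" "k \<noteq> 0" using g(2) k d0 by auto
  have "ord (g [^] k) = d" using ord_pow[OF g(1) kk] g(2) k d0 by simp
  then show ?thesis using g(1) by auto
qed

lemma mem_gen_imp:
  assumes "x \<in> carrier G" "y \<in> generate G {x}"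
  shows "ord y dvd ord x"
proof -
  obtain k :: int where k: "y = x [^] k" using assms generate_pow by auto
  have yc: "y \<in> carrier G" using k assms(1) by simp
  have "y [^] (int (ord x)) = x [^] (k * int (ord x))" using k assms(1) by (simp add: int_pow_pow)
  also have "\<dots> = \<one>" using assms(1) int_pow_eq_id by simp
  finally have "y [^] ord x = \<one>" by (simp add: int_pow_int)
  then show ?thesis using pow_eq_id[OF yc] by simp
qed

lemma mem_gen_iff:
  assumes "finite (carrier G)" "cyclic_group G" "x \<in> carrier G" "y \<in> carrier G"
  shows "y \<in> generate G {x} \<longleftrightarrow> ord y dvd ord x"
proof
  assume "y \<in> generate G {x}" then show "ord y dvd ord x" using mem_gen_imp assms by blast
next
  assume dv: "ord y dvd ord x"
  obtain g where g: "g \<in> carrier G" "ord g = order G" "\<And>x. x \<in> carrier G \<Longrightarrow> \<exists>i::nat. x = g [^] i"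
    using cyc_gen[OF assms(1,2)] by metis
  define n where "n = order G"
  have n0: "n > 0" using order_pos[OF assms(1)] n_def by simp
  obtain i :: nat where i: "x = g [^] i" using g assms(3) by blast
  obtain j :: nat where j: "y = g [^] j" using g assms(4) by blast
  define h where "h = gcd n i"
  have h0: "h > 0" using n0 h_def by simp
  have ox: "ord x = n div h" using ord_pow_gen[OF g(1), of i] i g(2) n_def h_def n0
    by (auto simp: gcd.commute)
  have "y [^] (n div h) = \<one>" using dv ox pow_eq_id assms(4) by simp
  then have "g [^] (j * (n div h)) = \<one>" using j g(1) by (simp add: nat_pow_pow)
  then have nd: "n dvd j * (n div h)" using pow_eq_id[OF g(1)] g(2) n_def by simp
  have "h dvd n" unfolding h_def by (rule gcd_dvd1)
  then obtain k where k: "n = h * k" by (rule dvdE)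
  have kd: "n div h = k" using k h0 by simp
  have k0: "k \<noteq> 0" using k n0 by (cases "k = 0") auto
  have "h * k dvd j * k" using nd unfolding kd by (simp add: k[symmetric])
  then have "h dvd j" using dvd_times_right_cancel_iff[OF k0] by simp
  then obtain m where m: "j = h * m" by (auto elim: dvdE)
  obtain u v :: int where uv: "u * int i + v * int n = int h"
    using bezout_int[of "int i" "int n"] h_def by (metis gcd.commute gcd_int_int_eq)
  have "int n dvd int j - int i * (u * int m)"
  proof -
    have "int j - int i * (u * int m) = (int h - u * int i) * int m" using m by (simp add: algebra_simps)
    also have "\<dots> = (u * int i + v * int n - u * int i) * int m" using uv by simp
    also have "\<dots> = (v * int m) * int n" by (simp add: algebra_simps)
    finally show ?thesis by simp
  qed
  then have "g [^] (int i * (u * int m)) = g [^] int j" using int_pow_eq[OF g(1)] g(2) n_def by simp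
  then have e: "g [^] (int i * (u * int m)) = y" using j by (simp add: int_pow_int)
  have "x [^] (u * int m) = (g [^] (int i)) [^] (u * int m)" using i by (simp add: int_pow_int)
  also have "\<dots> = g [^] (int i * (u * int m))" by (rule int_pow_pow[OF g(1)])
  finally have "y = x [^] (u * int m)" using e by simp
  then show "y \<in> generate G {x}" using generate_pow[OF assms(3)] by blast
qed

lemma inter_iff:
  assumes "finite (carrier G)" "cyclic_group G" "x \<in> carrier G" "y \<in> carrier G"
  shows "generate G {x} \<inter> generate G {y} \<noteq> {\<one>} \<longleftrightarrow> \<not> coprime (ord x) (ord y)"
proof
  assume "generate G {x} \<inter> generate G {y} \<noteq> {\<one>}"
  moreover have "\<one> \<in> generate G {x} \<inter> generate G {y}" by (simp add: generate.one)
  ultimately obtain z where z: "z \<in> generate G {x}" "z \<in> generate G {y}" "z \<noteq> \<one>" by blast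
  have zc: "z \<in> carrier G" using z(1) generate_in_carrier assms(3) by blast
  have d1: "ord z dvd ord x" by (rule mem_gen_imp[OF assms(3) z(1)])
  have d2: "ord z dvd ord y" by (rule mem_gen_imp[OF assms(4) z(2)])
  have "ord z \<noteq> 1" using ord_eq_1 zc z(3) by simp
  then show "\<not> coprime (ord x) (ord y)" using coprime_common_divisor_nat[OF _ d1 d2] by auto
next
  assume "\<not> coprime (ord x) (ord y)"
  then have "gcd (ord x) (ord y) \<noteq> 1" by (simp add: coprime_iff_gcd_eq_1)
  then obtain p :: nat where p0: "Factorial_Ring.prime p" "p dvd gcd (ord x) (ord y)"
    using prime_factor_nat by blast
  have p: "Factorial_Ring.prime p" "p dvd ord x" "p dvd ord y" using p0 by auto
  have "p dvd order G" by (rule dvd_trans[OF p(2) ord_dvd_group_order[OF assms(3)]])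
  then obtain z where z: "z \<in> carrier G" "ord z = p" using exists_ord[OF assms(1,2)] by blast
  have "z \<in> generate G {x}" "z \<in> generate G {y}" using mem_gen_iff assms z p by auto
  moreover have "z \<noteq> \<one>" using z p ord_eq_1 by auto
  ultimately show "generate G {x} \<inter> generate G {y} \<noteq> {\<one>}" by blast
qed

lemma pow_adj_iff:
  assumes "x \<in> carrier G" "y \<in> carrier G"
  shows "pow_adj G x y \<longleftrightarrow> x \<noteq> y \<and> (y \<in> generate G {x} \<or> x \<in> generate G {y})"
  using assms unfolding pow_adj_def by (auto simp: generate_pow)

lemma diff_adj_iff:
  assumes "finite (carrier G)" "cyclic_group G" "x \<in> carrier G" "y \<in> carrier G"
  shows "diff_adj G x y \<longleftrightarrow> Rd (ord x) (ord y)"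
proof (cases "x = \<one> \<or> y = \<one>")
  case True
  have "\<not> diff_adj G x y"
  proof
    assume d: "diff_adj G x y"
    then have "x \<noteq> y" unfolding diff_adj_def ipow_adj_def by auto
    moreover have "x \<in> generate G {y} \<or> y \<in> generate G {x}" using True generate.one by auto
    ultimately show False using d pow_adj_iff assms unfolding diff_adj_def by blast
  qed
  moreover have "ord x = 1 \<or> ord y = 1" using True by auto
  then have "\<not> Rd (ord x) (ord y)" using Rd_not1 Rd_sym by metis
  ultimately show ?thesis by blast
next
  case False
  then show ?thesis unfolding diff_adj_def ipow_adj_def Rd_def
    using pow_adj_iff[OF assms(3,4)] inter_iff[OF assms] mem_gen_iff[OF assms(1,2)] assms(3,4)
    by auto
qed

end



lemma div_dvd_n:
  assumes "(r::nat) dvd n" shows "n div r dvd n"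
proof -
  have "r * (n div r) = n" using assms by (rule dvd_mult_div_cancel)
  then show ?thesis by (metis dvd_triv_right)
qed

lemma two_elems:
  assumes "card S \<ge> 2"
  obtains a b where "a \<in> S" "b \<in> S" "a \<noteq> b"
proof -
  have fin: "finite S" using assms by (metis card.infinite not_numeral_le_zero)
  have "\<not> card S \<le> Suc 0" using assms by simp
  then have "\<not> (\<forall>a1 \<in> S. \<forall>a2 \<in> S. a1 = a2)" using card_le_Suc0_iff_eq[OF fin] by simp
  then show ?thesis using that by blast
qed

lemma relpowp_sym:
  assumes "\<And>x y. E x y \<Longrightarrow> E y x"
  shows "(E ^^ m) x y \<Longrightarrow> (E ^^ m) y x"
proof (induction m arbitrary: x y)
  case 0 then show ?case by simp
next
  case (Suc m)
  from Suc.prems obtain z where z: "(E ^^ m) x z" "E z y" by (rule relpowp_Suc_E)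
  have zx: "(E ^^ m) z x" using Suc.IH[OF z(1)] .
  show ?case by (rule relpowp_Suc_I2[OF assms[OF z(2)] zx])
qed

definition W :: "('a \<Rightarrow> 'a \<Rightarrow> bool) \<Rightarrow> nat \<Rightarrow> 'a \<Rightarrow> 'a \<Rightarrow> bool" where
  "W E k x y \<longleftrightarrow> (\<exists>m\<le>k. (E ^^ m) x y)"

lemma W_refl: "W E 0 x x" unfolding W_def by auto

lemma W_step: "E x y \<Longrightarrow> W E 1 x y" unfolding W_def by (intro exI[of _ 1]) auto

lemma W_mono: "W E j x y \<Longrightarrow> j \<le> k \<Longrightarrow> W E k x y"
proof -
  assume "W E j x y" "j \<le> k"
  then obtain m where "m \<le> j" "(E ^^ m) x y" unfolding W_def by auto
  then show ?thesis unfolding W_def using \<open>j \<le> k\<close> by (intro exI[of _ m]) simp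
qed

lemma W_trans: "W E j x y \<Longrightarrow> W E k y z \<Longrightarrow> W E (j + k) x z"
proof -
  assume "W E j x y" "W E k y z"
  then obtain a b where ab: "a \<le> j" "(E ^^ a) x y" "b \<le> k" "(E ^^ b) y z" unfolding W_def by auto
  have "(E ^^ (a + b)) x z" unfolding relpowp_add using ab by auto
  then show ?thesis unfolding W_def using ab by (intro exI[of _ "a + b"]) auto
qed

lemma W_sym: "(\<And>x y. E x y \<Longrightarrow> E y x) \<Longrightarrow> W E k x y \<Longrightarrow> W E k y x"
proof -
  assume s: "\<And>x y. E x y \<Longrightarrow> E y x" and w: "W E k x y"
  then obtain m where "m \<le> k" "(E ^^ m) x y" unfolding W_def by auto
  then show ?thesis unfolding W_def using relpowp_sym[of E, OF s] by blast
qed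

context group
begin

lemma iso_Zn:
  assumes "finite (carrier G)" "cyclic_group G"
  shows "G \<cong> integer_mod_group (order G)"
proof -
  obtain g where g: "g \<in> carrier G" "ord g = order G" "\<And>x. x \<in> carrier G \<Longrightarrow> \<exists>i::nat. x = g [^] i"
    using cyc_gen[OF assms] by metis
  define n where "n = order G"
  have n0: "n > 0" using order_pos[OF assms(1)] n_def by simp
  have car: "carrier (integer_mod_group n) = {0..<int n}" using n0 by (simp add: carrier_integer_mod_group)
  define f where "f = (\<lambda>k::int. g [^] k)"
  have modeq: "f (k mod int n) = f k" for k
  proof -
    have "int n dvd k - k mod int n" by (simp add: minus_mod_eq_mult_div)
    then show ?thesis unfolding f_def using int_pow_eq[OF g(1)] g(2) n_def by simp
  qed
  have hom: "f \<in> hom (integer_mod_group n) G"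
  proof (rule homI)
    fix x assume "x \<in> carrier (integer_mod_group n)"
    show "f x \<in> carrier G" unfolding f_def using g(1) by simp
  next
    fix x y assume "x \<in> carrier (integer_mod_group n)" "y \<in> carrier (integer_mod_group n)"
    have "f (x \<otimes>\<^bsub>integer_mod_group n\<^esub> y) = f ((x + y) mod int n)" by simp
    also have "\<dots> = f (x + y)" by (rule modeq)
    also have "\<dots> = f x \<otimes> f y" unfolding f_def by (rule int_pow_mult[OF g(1)])
    finally show "f (x \<otimes>\<^bsub>integer_mod_group n\<^esub> y) = f x \<otimes> f y" .
  qed
  have inj: "inj_on f {0..<int n}"
  proof (rule inj_onI)
    fix a b assume ab: "a \<in> {0..<int n}" "b \<in> {0..<int n}" "f a = f b"
    then have "int n dvd b - a" unfolding f_def using int_pow_eq[OF g(1)] g(2) n_def by simp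
    then have "b mod int n = a mod int n" by (simp add: mod_eq_dvd_iff)
    then show "a = b" using ab(1,2) by simp
  qed
  have surj: "f ` {0..<int n} = carrier G"
  proof
    show "f ` {0..<int n} \<subseteq> carrier G" unfolding f_def using g(1) by auto
  next
    show "carrier G \<subseteq> f ` {0..<int n}"
    proof
      fix x assume "x \<in> carrier G"
      then obtain i :: nat where i: "x = g [^] i" using g(3) by blast
      have "x = f (int i)" unfolding f_def i by (simp add: int_pow_int)
      also have "\<dots> = f (int i mod int n)" by (rule modeq[symmetric])
      finally show "x \<in> f ` {0..<int n}" using n0 by auto
    qed
  qed
  have "f \<in> iso (integer_mod_group n) G"
    by (rule isoI[OF hom]) (simp add: car bij_betw_def inj surj)
  then have "integer_mod_group n \<cong> G" by (rule is_isoI)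
  then show ?thesis unfolding n_def by (rule group.iso_sym[OF group_integer_mod_group])
qed

lemma diff_adj_carrier: "diff_adj G x y \<Longrightarrow> x \<in> carrier G \<and> y \<in> carrier G"
  unfolding diff_adj_def ipow_adj_def by simp

definition elt :: "nat \<Rightarrow> 'a" where "elt d = (SOME x. x \<in> carrier G \<and> ord x = d)"

lemma elt:
  assumes "finite (carrier G)" "cyclic_group G" "d dvd order G"
  shows "elt d \<in> carrier G" "ord (elt d) = d"
proof -
  have "\<exists>x. x \<in> carrier G \<and> ord x = d" using exists_ord[OF assms] by blast
  then have "elt d \<in> carrier G \<and> ord (elt d) = d" unfolding elt_def by (rule someI_ex)
  then show "elt d \<in> carrier G" "ord (elt d) = d" by auto
qed

lemma diff_adj_sym:
  assumes "finite (carrier G)" "cyclic_group G" "diff_adj G x y"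
  shows "diff_adj G y x"
proof -
  have c: "x \<in> carrier G" "y \<in> carrier G" using diff_adj_carrier[OF assms(3)] by auto
  have "Rd (ord x) (ord y)" using assms(3) diff_adj_iff[OF assms(1,2) c] by simp
  then have "Rd (ord y) (ord x)" by (rule Rd_sym)
  then show ?thesis using diff_adj_iff[OF assms(1,2) c(2,1)] by simp
qed

lemma verts_iff:
  assumes "finite (carrier G)" "cyclic_group G"
  shows "x \<in> diff_verts G \<longleftrightarrow> x \<in> carrier G \<and> (\<exists>b. b dvd order G \<and> Rd (ord x) b)"
proof
  assume "x \<in> diff_verts G"
  then obtain y where y: "diff_adj G x y" unfolding diff_verts_def by auto
  have c: "x \<in> carrier G" "y \<in> carrier G" using diff_adj_carrier[OF y] by auto
  have "Rd (ord x) (ord y)" using y diff_adj_iff[OF assms c] by simp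
  moreover have "ord y dvd order G" by (rule ord_dvd_group_order[OF c(2)])
  ultimately show "x \<in> carrier G \<and> (\<exists>b. b dvd order G \<and> Rd (ord x) b)" using c by blast
next
  assume "x \<in> carrier G \<and> (\<exists>b. b dvd order G \<and> Rd (ord x) b)"
  then obtain b where b: "x \<in> carrier G" "b dvd order G" "Rd (ord x) b" by blast
  have "diff_adj G x (elt b)" using diff_adj_iff[OF assms b(1) elt(1)[OF assms b(2)]] elt(2)[OF assms b(2)] b(3)
    by simp
  then show "x \<in> diff_verts G" unfolding diff_verts_def using b(1) by blast
qed

lemma near_hub:
  assumes fin: "finite (carrier G)" and cyc: "cyclic_group G"
    and p2: "Factorial_Ring.prime p1" "Factorial_Ring.prime p2" "p1 \<noteq> p2" "p1 dvd order G" "p2 dvd order G"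
    and xv: "x \<in> diff_verts G"
  shows "\<exists>r. Factorial_Ring.prime r \<and> r dvd order G \<and> W (diff_adj G) 2 x (elt (order G div r))"
proof -
  define n where "n = order G"
  have n0: "n \<noteq> 0" using order_pos[OF fin] n_def by simp
  obtain b where b: "x \<in> carrier G" "b dvd n" "Rd (ord x) b" using xv verts_iff[OF fin cyc] n_def by auto
  define a where "a = ord x"
  have an: "a dvd n" unfolding a_def n_def by (rule ord_dvd_group_order[OF b(1)])
  have Rab: "Rd a b" using b(3) a_def by simp
  have hubel: "elt (n div r) \<in> carrier G \<and> ord (elt (n div r)) = n div r" if "r dvd n" for r
    using elt[OF fin cyc, of "n div r"] n_def div_dvd_n[OF that] by simp
  have eltb: "elt c \<in> carrier G \<and> ord (elt c) = c" if "c dvd n" for c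
    using elt[OF fin cyc, of c] that n_def by simp
  have adj: "diff_adj G u v" if "u \<in> carrier G" "v \<in> carrier G" "Rd (ord u) (ord v)" for u v
    using diff_adj_iff[OF fin cyc that(1,2)] that(3) by simp
  have p2': "Factorial_Ring.prime p1" "Factorial_Ring.prime p2" "p1 \<noteq> p2" "p1 dvd n" "p2 dvd n"
    using p2 n_def by auto
  from lemmaB[OF Rab b(2) an n0 p2']
  show ?thesis
  proof (elim disjE exE conjE)
    fix r assume r: "Factorial_Ring.prime r" "r dvd n" "\<not> a dvd n div r"
    have h: "elt (n div r) \<in> carrier G" "ord (elt (n div r)) = n div r" using hubel[OF r(2)] by auto
    from lemmaA[OF Rab b(2) an r]
    have "W (diff_adj G) 2 x (elt (n div r))"
    proof
      assume eq: "a = n div r"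
      have y: "elt b \<in> carrier G" "ord (elt b) = b" using eltb[OF b(2)] by auto
      have e1: "diff_adj G x (elt b)" using adj[OF b(1) y(1)] y(2) b(3) by simp
      have e2: "diff_adj G (elt b) (elt (n div r))" using adj[OF y(1) h(1)] y(2) h(2) eq Rd_sym[OF Rab] by simp
      have "W (diff_adj G) (1 + 1) x (elt (n div r))" by (rule W_trans[OF W_step[of "diff_adj G", OF e1] W_step[of "diff_adj G", OF e2]])
      then show ?thesis using W_mono[of "diff_adj G" "1 + 1" x "elt (n div r)" 2] by simp
    next
      assume "Rd a (n div r)"
      then have e: "diff_adj G x (elt (n div r))" using adj[OF b(1) h(1)] h(2) a_def by simp
      show ?thesis by (rule W_mono[OF W_step[of "diff_adj G", OF e]]) simp
    qed
    then show ?thesis using r n_def by blast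
  next
    fix c r assume cr: "c dvd n" "Rd a c" "Factorial_Ring.prime r" "r dvd n" "\<not> c dvd n div r"
    have h: "elt (n div r) \<in> carrier G" "ord (elt (n div r)) = n div r" using hubel[OF cr(4)] by auto
    have y: "elt c \<in> carrier G" "ord (elt c) = c" using eltb[OF cr(1)] by auto
    have e1: "diff_adj G x (elt c)" using adj[OF b(1) y(1)] y(2) cr(2) a_def by simp
    from lemmaA[OF Rd_sym[OF cr(2)] an cr(1) cr(3,4,5)]
    have "W (diff_adj G) 2 x (elt (n div r))"
    proof
      assume eq: "c = n div r"
      have e: "diff_adj G x (elt (n div r))" using adj[OF b(1) h(1)] h(2) eq cr(2) a_def by simp
      show ?thesis by (rule W_mono[OF W_step[of "diff_adj G", OF e]]) simp
    next
      assume "Rd c (n div r)"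
      then have e2: "diff_adj G (elt c) (elt (n div r))" using adj[OF y(1) h(1)] h(2) y(2) by simp
      have "W (diff_adj G) (1 + 1) x (elt (n div r))" by (rule W_trans[OF W_step[of "diff_adj G", OF e1] W_step[of "diff_adj G", OF e2]])
      then show ?thesis using W_mono[of "diff_adj G" "1 + 1" x "elt (n div r)" 2] by simp
    qed
    then show ?thesis using cr n_def by blast
  qed
qed

lemma hub_W:
  assumes fin: "finite (carrier G)" and cyc: "cyclic_group G"
    and noq: "\<And>p q. Factorial_Ring.prime p \<Longrightarrow> Factorial_Ring.prime q \<Longrightarrow> p \<noteq> q \<Longrightarrow> order G \<noteq> p * q"
    and pr: "Factorial_Ring.prime p" "Factorial_Ring.prime r" "p dvd order G" "r dvd order G"
  shows "W (diff_adj G) 1 (elt (order G div p)) (elt (order G div r))"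
proof (cases "p = r")
  case True then show ?thesis using W_mono[OF W_refl[of "diff_adj G"], of 1] by simp
next
  case False
  have n0: "order G \<noteq> 0" using order_pos[OF fin] by simp
  have R: "Rd (order G div p) (order G div r)" by (rule hub[OF pr(1,2) False pr(3,4) noq[OF pr(1,2) False] n0])
  have d: "order G div p dvd order G" "order G div r dvd order G" using div_dvd_n pr(3,4) by auto
  have "diff_adj G (elt (order G div p)) (elt (order G div r))"
    using diff_adj_iff[OF fin cyc elt(1)[OF fin cyc d(1)] elt(1)[OF fin cyc d(2)]]
      elt(2)[OF fin cyc d(1)] elt(2)[OF fin cyc d(2)] R by simp
  then show ?thesis by (rule W_step)
qed

end

theorem theorem4p4:
  fixes G :: "('a, 'b) monoid_scheme"
  assumes "group G" and "finite (carrier G)" and "cyclic_group G"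
    and "card {p. Factorial_Ring.prime (p::nat) \<and> p dvd order G} \<ge> 2"
  shows "(\<not> diff_connected G \<longleftrightarrow>
           (\<exists>p q. Factorial_Ring.prime (p::nat) \<and> Factorial_Ring.prime q \<and> p \<noteq> q \<and> G \<cong> integer_mod_group (p * q)))
       \<and> ((\<not> (\<exists>p q. Factorial_Ring.prime (p::nat) \<and> Factorial_Ring.prime q \<and> p \<noteq> q \<and> G \<cong> integer_mod_group (p * q)))
            \<longrightarrow> diff_diam G \<le> 6)"
proof -
  interpret group G by (rule assms(1))
  note fin = assms(2) and cyc = assms(3)
  define Q' where "Q' \<longleftrightarrow> (\<exists>p q. Factorial_Ring.prime (p::nat) \<and> Factorial_Ring.prime q \<and> p \<noteq> q \<and> order G = p * q)"
  have QQ: "(\<exists>p q. Factorial_Ring.prime (p::nat) \<and> Factorial_Ring.prime q \<and> p \<noteq> q \<and> G \<cong> integer_mod_group (p * q)) \<longleftrightarrow> Q'"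
  proof
    assume "\<exists>p q. Factorial_Ring.prime (p::nat) \<and> Factorial_Ring.prime q \<and> p \<noteq> q \<and> G \<cong> integer_mod_group (p * q)"
    then obtain p q :: nat where pq: "Factorial_Ring.prime p" "Factorial_Ring.prime q" "p \<noteq> q"
      "G \<cong> integer_mod_group (p * q)" by blast
    have pq0: "p * q \<noteq> 0" using pq(1,2) by (simp add: prime_gt_0_nat)
    have "card (carrier G) = card (carrier (integer_mod_group (p * q)))" by (rule iso_same_card[OF pq(4)])
    also have "\<dots> = p * q" using pq0 by (simp add: carrier_integer_mod_group flip: of_nat_mult)
    finally have "order G = p * q" unfolding order_def .
    then show Q' unfolding Q'_def using pq(1-3) by blast
  next
    assume Q'
    then obtain p q :: nat where pq: "Factorial_Ring.prime p" "Factorial_Ring.prime q" "p \<noteq> q"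
      "order G = p * q" unfolding Q'_def by blast
    have "G \<cong> integer_mod_group (order G)" by (rule iso_Zn[OF fin cyc])
    then have "G \<cong> integer_mod_group (p * q)" using pq(4) by simp
    then show "\<exists>p q. Factorial_Ring.prime (p::nat) \<and> Factorial_Ring.prime q \<and> p \<noteq> q \<and> G \<cong> integer_mod_group (p * q)"
      using pq(1-3) by blast
  qed
  obtain p1 p2 where p12: "p1 \<in> {p. Factorial_Ring.prime (p::nat) \<and> p dvd order G}"
    "p2 \<in> {p. Factorial_Ring.prime (p::nat) \<and> p dvd order G}" "p1 \<noteq> p2"
    by (rule two_elems[OF assms(4)])
  have p2: "Factorial_Ring.prime p1" "Factorial_Ring.prime p2" "p1 \<noteq> p2" "p1 dvd order G" "p2 dvd order G"
    using p12 by auto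
  show ?thesis
  proof (cases Q')
    case True
    then obtain p q :: nat where pq: "Factorial_Ring.prime p" "Factorial_Ring.prime q" "p \<noteq> q"
      "order G = p * q" unfolding Q'_def by blast
    have "diff_verts G = {}"
    proof (rule ccontr)
      assume "diff_verts G \<noteq> {}"
      then obtain x where "x \<in> diff_verts G" by blast
      then obtain b where b: "x \<in> carrier G" "b dvd order G" "Rd (ord x) b" using verts_iff[OF fin cyc] by blast
      have "ord x dvd order G" by (rule ord_dvd_group_order[OF b(1)])
      then show False using pq_noRd[OF pq(1-3)] b(2,3) pq(4) by simp
    qed
    then have "\<not> diff_connected G" unfolding diff_connected_def by simp
    then show ?thesis using QQ True by simp
  next
    case False
    then have noq: "\<And>p q. Factorial_Ring.prime p \<Longrightarrow> Factorial_Ring.prime q \<Longrightarrow> p \<noteq> q \<Longrightarrow> order G \<noteq> p * q"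
      unfolding Q'_def by blast
    define E where "E = diff_adj G"
    have Esym: "\<And>x y. E x y \<Longrightarrow> E y x" using diff_adj_sym[OF fin cyc] unfolding E_def by blast
    have W5: "W E 5 x y" if xv: "x \<in> diff_verts G" and yv: "y \<in> diff_verts G" for x y
    proof -
      obtain r where r: "Factorial_Ring.prime r" "r dvd order G" "W E 2 x (elt (order G div r))"
        using near_hub[OF fin cyc p2 xv] unfolding E_def by blast
      obtain s where s: "Factorial_Ring.prime s" "s dvd order G" "W E 2 y (elt (order G div s))"
        using near_hub[OF fin cyc p2 yv] unfolding E_def by blast
      have h: "W E 1 (elt (order G div r)) (elt (order G div s))"
        using hub_W[OF fin cyc noq r(1) s(1) r(2) s(2)] unfolding E_def .
      have s': "W E 2 (elt (order G div s)) y" by (rule W_sym[OF Esym s(3)])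
      have "W E (2 + 1 + 2) x y" by (rule W_trans[OF W_trans[OF r(3) h] s'])
      then show ?thesis using W_mono[of E "2 + 1 + 2" x y 5] by simp
    qed
    have ne: "diff_verts G \<noteq> {}"
    proof -
      have R: "Rd (order G div p1) (order G div p2)"
        by (rule hub[OF p2 noq[OF p2(1-3)]]) (use order_pos[OF fin] in simp)
      have d: "order G div p1 dvd order G" "order G div p2 dvd order G" using div_dvd_n p2(4,5) by auto
      have "elt (order G div p1) \<in> diff_verts G"
        using verts_iff[OF fin cyc] elt[OF fin cyc d(1)] R d(2) by auto
      then show ?thesis by blast
    qed
    have conn: "diff_connected G"
      unfolding diff_connected_def
    proof (intro conjI ne ballI)
      fix u v assume "u \<in> diff_verts G" "v \<in> diff_verts G"
      then obtain m where "(E ^^ m) u v" using W5 unfolding W_def by blast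
      then show "(diff_adj G)\<^sup>*\<^sup>* u v" unfolding E_def by (rule relpowp_imp_rtranclp)
    qed
    have dist: "diff_dist G u v \<le> 6" if uv: "u \<in> diff_verts G" "v \<in> diff_verts G" for u v
    proof -
      obtain m where m: "m \<le> 5" "(E ^^ m) u v" using W5[OF uv] unfolding W_def by blast
      have ex: "\<exists>n. (diff_adj G ^^ n) u v" using m(2) unfolding E_def by blast
      have "(LEAST n. (diff_adj G ^^ n) u v) \<le> m" using m(2) unfolding E_def by (rule Least_le)
      then have "(LEAST n. (diff_adj G ^^ n) u v) \<le> 6" using m(1) by simp
      then have "enat (LEAST n. (diff_adj G ^^ n) u v) \<le> enat 6" by simp
      then show ?thesis unfolding diff_dist_def using ex by (simp add: numeral_eq_enat)
    qed
    have "diff_diam G \<le> 6" unfolding diff_diam_def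
      by (intro SUP_least dist)
    then show ?thesis using conn QQ False by simp
  qed
qed

end
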